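(* Let $M$ be an $(\mathcal R,\mathfrak g)$-module such that $\sigma(\mathfrak g_{\ge1})$ acts as zero on $M$. Then every additive subgroup $M'\subseteq M$ which is stable under the $\mathcal R$-action and under $\rho_{\mathfrak g}(\mathfrak g)$ is also stable under $\sigma(\mathfrak g_{\ge0})$, i.e. $M'$ is an $(\mathcal R,\mathfrak g)$-submodule.
   Context: $\mathbb F$ algebraically closed of characteristic $0$, $m,n\ge1$. $\mathcal R=\mathbb F[x_1,\dots,x_m]\otimes\Lambda(y_1,\dots,y_n)$ ($x_i$ even, $y_s$ odd), parity $\wp$. $\mathfrak g=W(m,n)$ the Lie superalgebra of superderivations of $\mathcal R$, free over $\mathcal R$ on even $\partial_i$ ($\partial_ix_j=\delta_{ij}$) and odd $D_t$ ($D_ty_s=\delta_{ts}$); $\mathfrak g_{\ge k}=\bigoplus_{i\ge k}\mathfrak g_i$ for the grading where $f\partial_j,fD_t\in\mathfrak g_{\deg f-1}$. An $(\mathcal R,\mathfrak g)$-module is an additive group $M$ with an $\mathcal R$-module structure $f\mapsto f_{\mathcal R}$, a $\mathfrak g$-module structure $\rho=\rho_{\mathfrak g}$ and a $\mathfrak g_{\ge0}$-module structure $\sigma$ such that for all $f\in\mathcal R$, $D\in\mathfrak g$, $D'\in\mathfrak g_{\ge0}$, $X\in\{\partial_i,D_j\}$: (i) $[\rho(D),f_{\mathcal R}]=(Df)_{\mathcal R}$; (ii) $[\sigma(D'),f_{\mathcal R}]=0$; (iii) $[\rho(X),\sigma(D')]=0$; (iv) $\rho(fX)=f_{\mathcal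 R}\circ\rho(X)+\sum_{i=1}^m(\partial_if)_{\mathcal R}\circ\sigma(x_iX)+(-1)^{\wp(f)+1}\sum_{j=1}^n(D_jf)_{\mathcal R}\circ\sigma(y_jX)$ (brackets are supercommutators). *)

theory Defs
  imports "HOL-Computational_Algebra.Polynomial"
begin

definition alg_closed :: "'k::field itself \<Rightarrow> bool" where
  "alg_closed _ \<longleftrightarrow> (\<forall>p::'k poly. degree p > 0 \<longrightarrow> (\<exists>x. poly p x = 0))"

section \<open>The superalgebra R = F[x_1..x_m] (x) Lambda(y_1..y_n)\<close>

text \<open>A monomial x^a y_S (with y_S = y_{s_1}...y_{s_k}, s_1 < ... < s_k) is the pair (a, S).
  Variables are indexed from 0: x_0..x_{m-1}, y_0..y_{n-1}.\<close>

type_synonym mono = "(nat \<Rightarrow> nat) \<times> nat set"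
type_synonym 'k sr = "mono \<Rightarrow> 'k"

definition mono_ok :: "nat \<Rightarrow> nat \<Rightarrow> mono \<Rightarrow> bool" where
  "mono_ok m n \<mu> \<longleftrightarrow> (\<forall>i\<ge>m. fst \<mu> i = 0) \<and> snd \<mu> \<subseteq> {..<n}"

definition Rset :: "nat \<Rightarrow> nat \<Rightarrow> ('k::zero) sr set" where
  "Rset m n = {f. finite {\<mu>. f \<mu> \<noteq> 0} \<and> (\<forall>\<mu>. f \<mu> \<noteq> 0 \<longrightarrow> mono_ok m n \<mu>)}"

definition sr_zero :: "('k::zero) sr" where "sr_zero = (\<lambda>_. 0)"
definition sr_add :: "('k::plus) sr \<Rightarrow> 'k sr \<Rightarrow> 'k sr" where
  "sr_add f g = (\<lambda>\<mu>. f \<mu> + g \<mu>)"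
definition sr_scale :: "('k::times) \<Rightarrow> 'k sr \<Rightarrow> 'k sr" where
  "sr_scale c f = (\<lambda>\<mu>. c * f \<mu>)"

definition sr_const :: "('k::zero) \<Rightarrow> 'k sr" where
  "sr_const c = (\<lambda>\<mu>. if \<mu> = (\<lambda>_. 0, {}) then c else 0)"
definition sr_x :: "nat \<Rightarrow> ('k::{zero,one}) sr" where
  "sr_x i = (\<lambda>\<mu>. if \<mu> = ((\<lambda>_. 0)(i := 1), {}) then 1 else 0)"
definition sr_y :: "nat \<Rightarrow> ('k::{zero,one}) sr" where
  "sr_y s = (\<lambda>\<mu>. if \<mu> = (\<lambda>_. 0, {s}) then 1 else 0)"

text \<open>Sign from reordering y_S y_T into increasing order.\<close>
definition ysgn :: "nat set \<Rightarrow> nat set \<Rightarrow> 'k::comm_ring_1" where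
  "ysgn S T = (-1) ^ card {(s,t). s \<in> S \<and> t \<in> T \<and> t < s}"

definition sr_mul :: "('k::comm_ring_1) sr \<Rightarrow> 'k sr \<Rightarrow> 'k sr" where
  "sr_mul f g = (\<lambda>\<mu>. \<Sum>\<alpha>\<in>{\<alpha>. f \<alpha> \<noteq> 0}. \<Sum>\<beta>\<in>{\<beta>. g \<beta> \<noteq> 0}.
      if (\<lambda>i. fst \<alpha> i + fst \<beta> i) = fst \<mu> \<and> snd \<alpha> \<inter> snd \<beta> = {} \<and> snd \<alpha> \<union> snd \<beta> = snd \<mu>
      then ysgn (snd \<alpha>) (snd \<beta>) * f \<alpha> * g \<beta> else 0)"

text \<open>Parity: f is homogeneous of parity p (p = True means odd).\<close>
definition Rhom :: "nat \<Rightarrow> nat \<Rightarrow> bool \<Rightarrow> ('k::zero) sr \<Rightarrow> bool" where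
  "Rhom m n p f \<longleftrightarrow> f \<in> Rset m n \<and> (\<forall>\<mu>. f \<mu> \<noteq> 0 \<longrightarrow> odd (card (snd \<mu>)) = p)"

definition mdeg :: "nat \<Rightarrow> mono \<Rightarrow> nat" where
  "mdeg m \<mu> = (\<Sum>i<m. fst \<mu> i) + card (snd \<mu>)"

text \<open>Partial derivatives: even \<partial>_i and odd (left) D_t.\<close>
definition dx :: "nat \<Rightarrow> ('k::comm_ring_1) sr \<Rightarrow> 'k sr" where
  "dx i h = (\<lambda>\<mu>. of_nat (fst \<mu> i + 1) * h ((fst \<mu>)(i := fst \<mu> i + 1), snd \<mu>))"
definition dy :: "nat \<Rightarrow> ('k::comm_ring_1) sr \<Rightarrow> 'k sr" where
  "dy t h = (\<lambda>\<mu>. if t \<in> snd \<mu> then 0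
                 else (-1) ^ card {s \<in> snd \<mu>. s < t} * h (fst \<mu>, insert t (snd \<mu>)))"

text \<open>An element (a, b) stands for  sum_{i<m} a_i \<partial>_i + sum_{t<n} b_t D_t.\<close>
type_synonym 'k wd = "(nat \<Rightarrow> 'k sr) \<times> (nat \<Rightarrow> 'k sr)"

definition Wset :: "nat \<Rightarrow> nat \<Rightarrow> ('k::zero) wd set" where
  "Wset m n = {D. (\<forall>i. fst D i \<in> Rset m n) \<and> (\<forall>i\<ge>m. fst D i = sr_zero)
                \<and> (\<forall>t. snd D t \<in> Rset m n) \<and> (\<forall>t\<ge>n. snd D t = sr_zero)}"

definition wadd :: "('k::plus) wd \<Rightarrow> 'k wd \<Rightarrow> 'k wd" where
  "wadd D E = ((\<lambda>i. sr_add (fst D i) (fst E i)), (\<lambda>t. sr_add (snd D t) (snd E t)))"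
definition wscale :: "('k::times) \<Rightarrow> 'k wd \<Rightarrow> 'k wd" where
  "wscale c D = ((\<lambda>i. sr_scale c (fst D i)), (\<lambda>t. sr_scale c (snd D t)))"

definition Wdx :: "nat \<Rightarrow> ('k::zero) sr \<Rightarrow> 'k wd" where
  "Wdx i f = ((\<lambda>_. sr_zero)(i := f), (\<lambda>_. sr_zero))"
definition Wdy :: "nat \<Rightarrow> ('k::zero) sr \<Rightarrow> 'k wd" where
  "Wdy t f = ((\<lambda>_. sr_zero), (\<lambda>_. sr_zero)(t := f))"

definition wact :: "nat \<Rightarrow> nat \<Rightarrow> ('k::comm_ring_1) wd \<Rightarrow> 'k sr \<Rightarrow> 'k sr" where
  "wact m n D h = (\<lambda>\<mu>. (\<Sum>i<m. sr_mul (fst D i) (dx i h) \<mu>) + (\<Sum>t<n. sr_mul (snd D t) (dy t h) \<mu>))"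

definition Whom :: "nat \<Rightarrow> nat \<Rightarrow> bool \<Rightarrow> ('k::zero) wd \<Rightarrow> bool" where
  "Whom m n p D \<longleftrightarrow> D \<in> Wset m n \<and> (\<forall>i. Rhom m n p (fst D i)) \<and> (\<forall>t. Rhom m n (\<not> p) (snd D t))"

definition psign :: "bool \<Rightarrow> bool \<Rightarrow> 'k::comm_ring_1" where
  "psign p q = (if p \<and> q then -1 else 1)"

text \<open>Super bracket of homogeneous D1 (parity p), D2 (parity q):
  [D1,D2] = D1 D2 - (-1)^{pq} D2 D1, determined by its values on the generators.\<close>
definition wbr :: "nat \<Rightarrow> nat \<Rightarrow> bool \<Rightarrow> bool \<Rightarrow> ('k::comm_ring_1) wd \<Rightarrow> 'k wd \<Rightarrow> 'k wd" where
  "wbr m n p q D1 D2 =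
     ((\<lambda>i. \<lambda>\<mu>. wact m n D1 (fst D2 i) \<mu> - psign p q * wact m n D2 (fst D1 i) \<mu>),
      (\<lambda>t. \<lambda>\<mu>. wact m n D1 (snd D2 t) \<mu> - psign p q * wact m n D2 (snd D1 t) \<mu>))"

text \<open>g_{\<ge>k}: all coefficients only involve monomials of degree \<ge> k+1.\<close>
definition Wge :: "nat \<Rightarrow> nat \<Rightarrow> nat \<Rightarrow> ('k::zero) wd set" where
  "Wge m n k = {D \<in> Wset m n. (\<forall>i \<mu>. fst D i \<mu> \<noteq> 0 \<longrightarrow> mdeg m \<mu> \<ge> k + 1)
                             \<and> (\<forall>t \<mu>. snd D t \<mu> \<noteq> 0 \<longrightarrow> mdeg m \<mu> \<ge> k + 1)}"

definition opsc :: "bool \<Rightarrow> bool \<Rightarrow> ('m::ab_group_add \<Rightarrow> 'm) \<Rightarrow> ('m \<Rightarrow> 'm) \<Rightarrow> 'm \<Rightarrow> 'm" where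
  "opsc p q A B = (\<lambda>u. if p \<and> q then A (B u) + B (A u) else A (B u) - B (A u))"

definition R_module :: "nat \<Rightarrow> nat \<Rightarrow> (('k::comm_ring_1) sr \<Rightarrow> 'm::ab_group_add \<Rightarrow> 'm) \<Rightarrow> bool" where
  "R_module m n act \<longleftrightarrow>
     (\<forall>f\<in>Rset m n. \<forall>u v. act f (u + v) = act f u + act f v)
   \<and> (\<forall>f\<in>Rset m n. \<forall>g\<in>Rset m n. \<forall>u. act (sr_add f g) u = act f u + act g u)
   \<and> (\<forall>f\<in>Rset m n. \<forall>g\<in>Rset m n. \<forall>u. act (sr_mul f g) u = act f (act g u))
   \<and> (\<forall>u. act (sr_const 1) u = u)"

text \<open>Representation of the Lie superalgebra (the sub-superalgebra S of W(m,n)) on M,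
  where scalars act on M through the R-module structure.\<close>
definition Lie_rep :: "nat \<Rightarrow> nat \<Rightarrow> ('k::comm_ring_1) wd set \<Rightarrow> ('k sr \<Rightarrow> 'm::ab_group_add \<Rightarrow> 'm)
                       \<Rightarrow> ('k wd \<Rightarrow> 'm \<Rightarrow> 'm) \<Rightarrow> bool" where
  "Lie_rep m n S act r \<longleftrightarrow>
     (\<forall>D\<in>S. \<forall>u v. r D (u + v) = r D u + r D v)
   \<and> (\<forall>D\<in>S. \<forall>E\<in>S. \<forall>u. r (wadd D E) u = r D u + r E u)
   \<and> (\<forall>D\<in>S. \<forall>c u. r (wscale c D) u = act (sr_const c) (r D u))
   \<and> (\<forall>p q D E u. D \<in> S \<longrightarrow> E \<in> S \<longrightarrow> Whom m n p D \<longrightarrow> Whom m n q E \<longrightarrow>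
         r (wbr m n p q D E) u = opsc p q (r D) (r E) u)"

definition RG_module :: "nat \<Rightarrow> nat \<Rightarrow> (('k::comm_ring_1) sr \<Rightarrow> 'm::ab_group_add \<Rightarrow> 'm)
                         \<Rightarrow> ('k wd \<Rightarrow> 'm \<Rightarrow> 'm) \<Rightarrow> ('k wd \<Rightarrow> 'm \<Rightarrow> 'm) \<Rightarrow> bool" where
  "RG_module m n act rho sigma \<longleftrightarrow>
     R_module m n act
   \<and> Lie_rep m n (Wset m n) act rho
   \<and> Lie_rep m n (Wge m n 0) act sigma
   \<comment> \<open>(i)\<close>
   \<and> (\<forall>p q D f u. Whom m n p D \<longrightarrow> Rhom m n q f \<longrightarrow>
         opsc p q (rho D) (act f) u = act (wact m n D f) u)
   \<comment> \<open>(ii)\<close>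
   \<and> (\<forall>p q D f u. Whom m n p D \<longrightarrow> D \<in> Wge m n 0 \<longrightarrow> Rhom m n q f \<longrightarrow>
         opsc p q (sigma D) (act f) u = 0)
   \<comment> \<open>(iii)\<close>
   \<and> (\<forall>p D u. Whom m n p D \<longrightarrow> D \<in> Wge m n 0 \<longrightarrow>
         (\<forall>i<m. opsc False p (rho (Wdx i (sr_const 1))) (sigma D) u = 0)
       \<and> (\<forall>j<n. opsc True p (rho (Wdy j (sr_const 1))) (sigma D) u = 0))
   \<comment> \<open>(iv), X = \<partial>_l and X = D_l\<close>
   \<and> (\<forall>p f u. Rhom m n p f \<longrightarrow>
        (\<forall>l<m. rho (Wdx l f) u =
            act f (rho (Wdx l (sr_const 1)) u)
          + (\<Sum>i<m. act (dx i f) (sigma (Wdx l (sr_x i)) u))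
          + (if p then (\<Sum>j<n. act (dy j f) (sigma (Wdx l (sr_y j)) u))
                  else - (\<Sum>j<n. act (dy j f) (sigma (Wdx l (sr_y j)) u))))
      \<and> (\<forall>l<n. rho (Wdy l f) u =
            act f (rho (Wdy l (sr_const 1)) u)
          + (\<Sum>i<m. act (dx i f) (sigma (Wdy l (sr_x i)) u))
          + (if p then (\<Sum>j<n. act (dy j f) (sigma (Wdy l (sr_y j)) u))
                  else - (\<Sum>j<n. act (dy j f) (sigma (Wdy l (sr_y j)) u)))))"

end

theory Submission
  imports Defs
begin


lemma sr_zero_Rset: "sr_zero \<in> Rset m n"
  by (simp add: Rset_def sr_zero_def)

lemma sr_const_Rset: "sr_const c \<in> Rset m n"
proof -
  have "{\<mu>. sr_const c \<mu> \<noteq> 0} \<subseteq> {(\<lambda>_. 0, {})}" by (auto simp: sr_const_def split: if_splits)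
  then show ?thesis by (auto simp: Rset_def sr_const_def mono_ok_def intro: finite_subset split: if_splits)
qed

lemma sr_x_Rset: "k < m \<Longrightarrow> sr_x k \<in> Rset m n"
proof -
  assume k: "k < m"
  have "{\<mu>. (sr_x k :: 'a::{zero,one} sr) \<mu> \<noteq> 0} \<subseteq> {((\<lambda>_. 0)(k := 1), {})}" by (auto simp: sr_x_def split: if_splits)
  then show ?thesis using k by (auto simp: Rset_def sr_x_def mono_ok_def intro: finite_subset split: if_splits)
qed

lemma sr_y_Rset: "j < n \<Longrightarrow> sr_y j \<in> Rset m n"
proof -
  assume k: "j < n"
  have "{\<mu>. (sr_y j :: 'a::{zero,one} sr) \<mu> \<noteq> 0} \<subseteq> {(\<lambda>_. 0, {j})}" by (auto simp: sr_y_def split: if_splits)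
  then show ?thesis using k by (auto simp: Rset_def sr_y_def mono_ok_def intro: finite_subset split: if_splits)
qed

lemma Rhom_x: "k < m \<Longrightarrow> Rhom m n False (sr_x k)"
  using sr_x_Rset by (auto simp: Rhom_def sr_x_def split: if_splits)

lemma Rhom_y: "j < n \<Longrightarrow> Rhom m n True (sr_y j)"
  using sr_y_Rset by (auto simp: Rhom_def sr_y_def split: if_splits)

lemma dx_x: "dx i (sr_x k :: 'k::comm_ring_1 sr) = (if i = k then sr_const 1 else sr_zero)"
proof (rule ext)
  fix \<mu> :: mono
  obtain a S where mu: "\<mu> = (a, S)" by (cases \<mu>)
  show "dx i (sr_x k :: 'k sr) \<mu> = (if i = k then sr_const 1 else sr_zero) \<mu>"
  proof (cases "i = k")
    case True
    have "(a(i := Suc (a i)) = (\<lambda>_. 0)(k := 1)) = (a = (\<lambda>_. 0))"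
      using True by (auto simp: fun_eq_iff split: if_splits)
    then show ?thesis using True by (auto simp: mu dx_def sr_x_def sr_const_def)
  next
    case False
    have "a(i := Suc (a i)) \<noteq> (\<lambda>_. 0)(k := 1)"
      using False by (auto simp: fun_eq_iff dest: spec[of _ i])
    then show ?thesis using False by (auto simp: mu dx_def sr_x_def sr_zero_def)
  qed
qed

lemma dy_x: "dy j (sr_x k :: 'k::comm_ring_1 sr) = sr_zero"
  by (auto simp: fun_eq_iff dy_def sr_x_def sr_zero_def)

lemma dx_y: "dx i (sr_y s :: 'k::comm_ring_1 sr) = sr_zero"
  by (auto simp: fun_eq_iff dx_def sr_y_def sr_zero_def dest: fun_cong[of _ _ i])

lemma dy_y: "dy j (sr_y s :: 'k::comm_ring_1 sr) = (if j = s then sr_const 1 else sr_zero)"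
proof (rule ext)
  fix \<mu> :: mono
  obtain a S where mu: "\<mu> = (a, S)" by (cases \<mu>)
  show "dy j (sr_y s :: 'k sr) \<mu> = (if j = s then sr_const 1 else sr_zero) \<mu>"
  proof (cases "j = s")
    case True
    have "(j \<notin> S \<and> insert j S = {s}) = (S = {})" using True by auto
    then show ?thesis using True by (auto simp: mu dy_def sr_y_def sr_const_def)
  next
    case False
    then show ?thesis by (auto simp: mu dy_def sr_y_def sr_zero_def)
  qed
qed

lemma Wdx_Wset: "i < m \<Longrightarrow> f \<in> Rset m n \<Longrightarrow> Wdx i f \<in> Wset m n"
  by (auto simp: Wset_def Wdx_def sr_zero_Rset)

lemma Wdy_Wset: "i < n \<Longrightarrow> f \<in> Rset m n \<Longrightarrow> Wdy i f \<in> Wset m n"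
  by (auto simp: Wset_def Wdy_def sr_zero_Rset)

lemma Wdx_Wge: "i < m \<Longrightarrow> f \<in> Rset m n \<Longrightarrow> \<forall>\<mu>. f \<mu> \<noteq> 0 \<longrightarrow> mdeg m \<mu> \<ge> k + 1 \<Longrightarrow> Wdx i f \<in> Wge m n k"
  using Wdx_Wset[of i m f n] by (auto simp: Wge_def Wdx_def sr_zero_def)

lemma Wdy_Wge: "i < n \<Longrightarrow> f \<in> Rset m n \<Longrightarrow> \<forall>\<mu>. f \<mu> \<noteq> 0 \<longrightarrow> mdeg m \<mu> \<ge> k + 1 \<Longrightarrow> Wdy i f \<in> Wge m n k"
  using Wdy_Wset[of i n f m] by (auto simp: Wge_def Wdy_def sr_zero_def)

lemma mdeg_x: "k < m \<Longrightarrow> mdeg m ((\<lambda>_. 0)(k := 1), {}) = 1"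
  by (simp add: mdeg_def fun_upd_apply sum.delta)

lemma mdeg_y: "mdeg m (\<lambda>_. 0, {j}) = 1"
  by (simp add: mdeg_def)

lemma x_deg: "\<forall>\<mu>. (sr_x k :: 'k::{zero,one} sr) \<mu> \<noteq> 0 \<longrightarrow> mdeg m \<mu> \<ge> 0 + 1" if "k < m"
  using that mdeg_x by (auto simp: sr_x_def split: if_splits)

lemma y_deg: "\<forall>\<mu>. (sr_y k :: 'k::{zero,one} sr) \<mu> \<noteq> 0 \<longrightarrow> mdeg m \<mu> \<ge> 0 + 1"
  using mdeg_y by (auto simp: sr_y_def split: if_splits)

lemma sum_eq_1_nat: "(\<Sum>i<(m::nat). g i) = (1::nat) \<Longrightarrow> \<exists>k<m. \<forall>i<m. g i = (if i = k then 1 else 0)"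
proof -
  assume s: "(\<Sum>i<m. g i) = (1::nat)"
  obtain k where k: "k < m" "g k \<noteq> 0"
    using s by (metis lessThan_iff sum.neutral zero_neq_one)
  have "(\<Sum>i<m. g i) = g k + (\<Sum>i\<in>{..<m} - {k}. g i)"
    using k sum.remove[OF finite_lessThan, of k m g] by simp
  then have "g k = 1" and "(\<Sum>i\<in>{..<m} - {k}. g i) = 0" using s k by linarith+
  then have "\<forall>i<m. g i = (if i = k then 1 else 0)" by auto
  then show ?thesis using k by blast
qed

lemma deg1: "mono_ok m n \<mu> \<Longrightarrow> mdeg m \<mu> = 1 \<Longrightarrow>
   (\<exists>k<m. \<mu> = ((\<lambda>_. 0)(k := 1), {})) \<or> (\<exists>j<n. \<mu> = (\<lambda>_. 0, {j}))"
proof -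
  assume ok: "mono_ok m n \<mu>" and d: "mdeg m \<mu> = 1"
  obtain a S where mu: "\<mu> = (a, S)" by (cases \<mu>)
  have a0: "\<forall>i\<ge>m. a i = 0" and Sn: "S \<subseteq> {..<n}" using ok by (auto simp: mono_ok_def mu)
  have fS: "finite S" using Sn finite_subset by blast
  have d': "(\<Sum>i<m. a i) + card S = 1" using d by (simp add: mdeg_def mu)
  show ?thesis
  proof (cases "card S = 0")
    case True
    then have "S = {}" using fS by simp
    from d' True have "(\<Sum>i<m. a i) = 1" by simp
    then obtain k where k: "k < m" "\<forall>i<m. a i = (if i = k then 1 else 0)" using sum_eq_1_nat by blast
    have "a = (\<lambda>_. 0)(k := 1)"
    proof
      fix i show "a i = ((\<lambda>_. 0)(k := 1)) i" using k a0 by (cases "i < m") auto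
    qed
    then show ?thesis using k `S = {}` mu by blast
  next
    case False
    then have c1: "card S = 1" and s0: "(\<Sum>i<m. a i) = 0" using d' by linarith+
    then obtain j where j: "S = {j}" using card_1_singletonE by blast
    have "a = (\<lambda>_. 0)"
    proof
      fix i show "a i = 0" using s0 a0 by (cases "i < m") auto
    qed
    then show ?thesis using j Sn mu by auto
  qed
qed


definition zap :: "(nat + nat) \<times> mono \<Rightarrow> ('k::zero) wd \<Rightarrow> 'k wd" where
  "zap e D = ((\<lambda>i \<mu>. if (Inl i, \<mu>) = e then 0 else fst D i \<mu>), (\<lambda>t \<mu>. if (Inr t, \<mu>) = e then 0 else snd D t \<mu>))"
definition sgl :: "(nat + nat) \<times> mono \<Rightarrow> ('k::zero) wd \<Rightarrow> 'k wd" where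
  "sgl e D = ((\<lambda>i \<mu>. if (Inl i, \<mu>) = e then fst D i \<mu> else 0), (\<lambda>t \<mu>. if (Inr t, \<mu>) = e then snd D t \<mu> else 0))"
definition ent :: "('k::zero) wd \<Rightarrow> ((nat + nat) \<times> mono) set" where
  "ent D = {(Inl i, \<mu>) | i \<mu>. fst D i \<mu> \<noteq> 0} \<union> {(Inr t, \<mu>) | t \<mu>. snd D t \<mu> \<noteq> 0}"

lemma Rset_sub: "f \<in> Rset m n \<Longrightarrow> (\<forall>\<mu>. g \<mu> \<noteq> 0 \<longrightarrow> f \<mu> \<noteq> 0) \<Longrightarrow> g \<in> Rset m n"
proof -
  assume f: "f \<in> Rset m n" and s: "\<forall>\<mu>. g \<mu> \<noteq> 0 \<longrightarrow> f \<mu> \<noteq> 0"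
  have "{\<mu>. g \<mu> \<noteq> 0} \<subseteq> {\<mu>. f \<mu> \<noteq> 0}" using s by blast
  then have "finite {\<mu>. g \<mu> \<noteq> 0}" using f finite_subset unfolding Rset_def by blast
  then show ?thesis using f s unfolding Rset_def by blast
qed

lemma zap_Wge: "D \<in> Wge m n k \<Longrightarrow> zap e D \<in> Wge m n k"
proof -
  assume D: "D \<in> Wge m n k"
  have r1: "\<And>i. fst D i \<in> Rset m n" and r2: "\<And>t. snd D t \<in> Rset m n"
    and z1: "\<And>i. i \<ge> m \<Longrightarrow> fst D i = sr_zero" and z2: "\<And>t. t \<ge> n \<Longrightarrow> snd D t = sr_zero"
    and d1: "\<forall>i \<mu>. fst D i \<mu> \<noteq> 0 \<longrightarrow> mdeg m \<mu> \<ge> k + 1"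
    and d2: "\<forall>t \<mu>. snd D t \<mu> \<noteq> 0 \<longrightarrow> mdeg m \<mu> \<ge> k + 1"
    using D unfolding Wge_def Wset_def by blast+
  have "fst (zap e D) i \<in> Rset m n" for i
    by (rule Rset_sub[OF r1[of i]]) (simp add: zap_def)
  moreover have "snd (zap e D) t \<in> Rset m n" for t
    by (rule Rset_sub[OF r2[of t]]) (simp add: zap_def)
  moreover have "\<And>i. i \<ge> m \<Longrightarrow> fst (zap e D) i = sr_zero"
    using z1 by (simp add: zap_def sr_zero_def fun_eq_iff)
  moreover have "\<And>t. t \<ge> n \<Longrightarrow> snd (zap e D) t = sr_zero"
    using z2 by (simp add: zap_def sr_zero_def fun_eq_iff)
  moreover have "\<forall>i \<mu>. fst (zap e D) i \<mu> \<noteq> 0 \<longrightarrow> mdeg m \<mu> \<ge> k + 1"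
    using d1 by (simp add: zap_def)
  moreover have "\<forall>t \<mu>. snd (zap e D) t \<mu> \<noteq> 0 \<longrightarrow> mdeg m \<mu> \<ge> k + 1"
    using d2 by (simp add: zap_def)
  ultimately show ?thesis unfolding Wge_def Wset_def by blast
qed

lemma sgl_Wge: "D \<in> Wge m n k \<Longrightarrow> sgl e D \<in> Wge m n k"
proof -
  assume D: "D \<in> Wge m n k"
  have r1: "\<And>i. fst D i \<in> Rset m n" and r2: "\<And>t. snd D t \<in> Rset m n"
    and z1: "\<And>i. i \<ge> m \<Longrightarrow> fst D i = sr_zero" and z2: "\<And>t. t \<ge> n \<Longrightarrow> snd D t = sr_zero"
    and d1: "\<forall>i \<mu>. fst D i \<mu> \<noteq> 0 \<longrightarrow> mdeg m \<mu> \<ge> k + 1"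
    and d2: "\<forall>t \<mu>. snd D t \<mu> \<noteq> 0 \<longrightarrow> mdeg m \<mu> \<ge> k + 1"
    using D unfolding Wge_def Wset_def by blast+
  have "fst (sgl e D) i \<in> Rset m n" for i
    by (rule Rset_sub[OF r1[of i]]) (simp add: sgl_def)
  moreover have "snd (sgl e D) t \<in> Rset m n" for t
    by (rule Rset_sub[OF r2[of t]]) (simp add: sgl_def)
  moreover have "\<And>i. i \<ge> m \<Longrightarrow> fst (sgl e D) i = sr_zero"
    using z1 by (simp add: sgl_def sr_zero_def fun_eq_iff)
  moreover have "\<And>t. t \<ge> n \<Longrightarrow> snd (sgl e D) t = sr_zero"
    using z2 by (simp add: sgl_def sr_zero_def fun_eq_iff)
  moreover have "\<forall>i \<mu>. fst (sgl e D) i \<mu> \<noteq> 0 \<longrightarrow> mdeg m \<mu> \<ge> k + 1"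
    using d1 by (simp add: sgl_def)
  moreover have "\<forall>t \<mu>. snd (sgl e D) t \<mu> \<noteq> 0 \<longrightarrow> mdeg m \<mu> \<ge> k + 1"
    using d2 by (simp add: sgl_def)
  ultimately show ?thesis unfolding Wge_def Wset_def by blast
qed

lemma wadd_zap_sgl: "wadd (zap e D) (sgl e D) = (D :: ('k::monoid_add) wd)"
  by (auto simp: wadd_def zap_def sgl_def sr_add_def fun_eq_iff prod_eq_iff)

lemma ent_zap: "ent (zap e D) = ent D - {e}"
  unfolding ent_def zap_def by (rule set_eqI) (simp, blast)

lemma ent_sgl: "ent (sgl e D) \<subseteq> {e}"
  by (auto simp: ent_def sgl_def split: if_splits)

lemma finite_ent: "D \<in> Wset m n \<Longrightarrow> finite (ent D)"
proof -
  assume D: "D \<in> Wset m n"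
  have "ent D \<subseteq> (\<Union>i<m. (\<lambda>\<mu>. (Inl i, \<mu>)) ` {\<mu>. fst D i \<mu> \<noteq> 0}) \<union> (\<Union>t<n. (\<lambda>\<mu>. (Inr t, \<mu>)) ` {\<mu>. snd D t \<mu> \<noteq> 0})"
  proof
    fix x assume "x \<in> ent D"
    then consider i \<mu> where "x = (Inl i, \<mu>)" "fst D i \<mu> \<noteq> 0" | t \<mu> where "x = (Inr t, \<mu>)" "snd D t \<mu> \<noteq> 0"
      unfolding ent_def by blast
    then show "x \<in> (\<Union>i<m. (\<lambda>\<mu>. (Inl i, \<mu>)) ` {\<mu>. fst D i \<mu> \<noteq> 0}) \<union> (\<Union>t<n. (\<lambda>\<mu>. (Inr t, \<mu>)) ` {\<mu>. snd D t \<mu> \<noteq> 0})"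
    proof cases
      case 1 then show ?thesis using D by (cases "i < m") (auto simp: Wset_def sr_zero_def)
    next
      case 2 then show ?thesis using D by (cases "t < n") (auto simp: Wset_def sr_zero_def)
    qed
  qed
  moreover have "finite ((\<Union>i<m. (\<lambda>\<mu>. (Inl i, \<mu>)) ` {\<mu>. fst D i \<mu> \<noteq> 0}) \<union> (\<Union>t<n. (\<lambda>\<mu>. (Inr t, \<mu>)) ` {\<mu>. snd D t \<mu> \<noteq> 0}))"
    using D by (auto simp: Wset_def Rset_def)
  ultimately show ?thesis by (rule finite_subset)
qed

lemma ent_empty: "D \<in> Wset m n \<Longrightarrow> ent D = {} \<Longrightarrow> D \<in> Wge m n k"
  by (auto simp: ent_def Wge_def)

lemma single_x:
  fixes D :: "('k::comm_ring_1) wd"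
  assumes D: "D \<in> Wge m n 0" and e: "ent D \<subseteq> {(Inl i, \<mu>)}"
  shows "D \<in> Wge m n 1 \<or> (i < m \<and> (\<exists>k<m. D = wscale (fst D i \<mu>) (Wdx i (sr_x k))))
       \<or> (i < m \<and> (\<exists>j<n. D = wscale (fst D i \<mu>) (Wdx i (sr_y j))))"
proof -
  have z1: "\<And>i' \<nu>. (i', \<nu>) \<noteq> (i, \<mu>) \<Longrightarrow> fst D i' \<nu> = 0"
  proof (rule ccontr)
    fix i' \<nu> assume "(i', \<nu>) \<noteq> (i, \<mu>)" "fst D i' \<nu> \<noteq> 0"
    then have "(Inl i', \<nu>) \<in> ent D" unfolding ent_def by blast
    then show False using e `(i', \<nu>) \<noteq> (i, \<mu>)` by blast
  qed
  have z2: "\<And>t \<nu>. snd D t \<nu> = 0"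
  proof (rule ccontr)
    fix t \<nu> assume "snd D t \<nu> \<noteq> 0"
    then have "(Inr t, \<nu>) \<in> ent D" unfolding ent_def by blast
    then show False using e by blast
  qed
  show ?thesis
  proof (cases "fst D i \<mu> = 0")
    case True
    then have "(Inl i, \<mu>) \<notin> ent D" unfolding ent_def by auto
    then have "ent D = {}" using e by blast
    then have "D \<in> Wge m n 1" using D ent_empty[of D m n 1] by (simp add: Wge_def)
    then show ?thesis by blast
  next
    case False
    have DW: "D \<in> Wset m n" and Dd: "\<forall>i \<mu>. fst D i \<mu> \<noteq> 0 \<longrightarrow> mdeg m \<mu> \<ge> 0 + 1"
      using D unfolding Wge_def by blast+
    have im: "i < m"
    proof (rule ccontr)
      assume "\<not> i < m"
      then have "fst D i = sr_zero" using DW unfolding Wset_def by simp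
      then show False using False by (simp add: sr_zero_def)
    qed
    have "fst D i \<in> Rset m n" using DW unfolding Wset_def by blast
    then have ok: "mono_ok m n \<mu>" using False unfolding Rset_def by blast
    have d1: "mdeg m \<mu> \<ge> 1" using spec[OF spec[OF Dd, of i], of \<mu>] False by simp
    show ?thesis
    proof (cases "mdeg m \<mu> \<ge> 2")
      case True
      have a1: "\<forall>i' \<nu>. fst D i' \<nu> \<noteq> 0 \<longrightarrow> mdeg m \<nu> \<ge> 1 + 1" using z1 True by (metis Pair_inject one_add_one)
      have a2: "\<forall>t \<nu>. snd D t \<nu> \<noteq> 0 \<longrightarrow> mdeg m \<nu> \<ge> 1 + 1" using z2 by simp
      have "D \<in> Wge m n 1" using D a1 a2 unfolding Wge_def by blast
      then show ?thesis by blast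
    next
      case False
      then have "mdeg m \<mu> = 1" using d1 by simp
      from deg1[OF ok this] show ?thesis
      proof
        assume "\<exists>k<m. \<mu> = ((\<lambda>_. 0)(k := 1), {})"
        then obtain k where k: "k < m" "\<mu> = ((\<lambda>_. 0)(k := 1), {})" by blast
        have "D = wscale (fst D i \<mu>) (Wdx i (sr_x k))"
        proof (rule prod_eqI)
          show "fst D = fst (wscale (fst D i \<mu>) (Wdx i (sr_x k)))"
          proof (rule ext, rule ext)
            fix i' \<nu>
            show "fst D i' \<nu> = fst (wscale (fst D i \<mu>) (Wdx i (sr_x k))) i' \<nu>"
            proof (cases "i' = i \<and> \<nu> = \<mu>")
              case True then show ?thesis using k(2) by (simp add: wscale_def Wdx_def sr_scale_def sr_x_def)
            next
              case False
              then have "fst D i' \<nu> = 0" using z1 by blast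
              then show ?thesis using False k(2) by (auto simp: wscale_def Wdx_def sr_scale_def sr_x_def sr_zero_def)
            qed
          qed
          show "snd D = snd (wscale (fst D i \<mu>) (Wdx i (sr_x k)))"
            using z2 by (simp add: fun_eq_iff wscale_def Wdx_def sr_scale_def sr_zero_def)
        qed
        then show ?thesis using im k by blast
      next
        assume "\<exists>j<n. \<mu> = (\<lambda>_. 0, {j})"
        then obtain k where k: "k < n" "\<mu> = (\<lambda>_. 0, {k})" by blast
        have "D = wscale (fst D i \<mu>) (Wdx i (sr_y k))"
        proof (rule prod_eqI)
          show "fst D = fst (wscale (fst D i \<mu>) (Wdx i (sr_y k)))"
          proof (rule ext, rule ext)
            fix i' \<nu>
            show "fst D i' \<nu> = fst (wscale (fst D i \<mu>) (Wdx i (sr_y k))) i' \<nu>"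
            proof (cases "i' = i \<and> \<nu> = \<mu>")
              case True then show ?thesis using k(2) by (simp add: wscale_def Wdx_def sr_scale_def sr_y_def)
            next
              case False
              then have "fst D i' \<nu> = 0" using z1 by blast
              then show ?thesis using False k(2) by (auto simp: wscale_def Wdx_def sr_scale_def sr_y_def sr_zero_def)
            qed
          qed
          show "snd D = snd (wscale (fst D i \<mu>) (Wdx i (sr_y k)))"
            using z2 by (simp add: fun_eq_iff wscale_def Wdx_def sr_scale_def sr_zero_def)
        qed
        then show ?thesis using im k by blast
      qed
    qed
  qed
qed

lemma single_y:
  fixes D :: "('k::comm_ring_1) wd"
  assumes D: "D \<in> Wge m n 0" and e: "ent D \<subseteq> {(Inr i, \<mu>)}"
  shows "D \<in> Wge m n 1 \<or> (i < n \<and> (\<exists>k<m. D = wscale (snd D i \<mu>) (Wdy i (sr_x k))))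
       \<or> (i < n \<and> (\<exists>j<n. D = wscale (snd D i \<mu>) (Wdy i (sr_y j))))"
proof -
  have z1: "\<And>i' \<nu>. (i', \<nu>) \<noteq> (i, \<mu>) \<Longrightarrow> snd D i' \<nu> = 0"
  proof (rule ccontr)
    fix i' \<nu> assume "(i', \<nu>) \<noteq> (i, \<mu>)" "snd D i' \<nu> \<noteq> 0"
    then have "(Inr i', \<nu>) \<in> ent D" unfolding ent_def by blast
    then show False using e `(i', \<nu>) \<noteq> (i, \<mu>)` by blast
  qed
  have z2: "\<And>t \<nu>. fst D t \<nu> = 0"
  proof (rule ccontr)
    fix t \<nu> assume "fst D t \<nu> \<noteq> 0"
    then have "(Inl t, \<nu>) \<in> ent D" unfolding ent_def by blast
    then show False using e by blast
  qed
  show ?thesis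
  proof (cases "snd D i \<mu> = 0")
    case True
    then have "(Inr i, \<mu>) \<notin> ent D" unfolding ent_def by auto
    then have "ent D = {}" using e by blast
    then have "D \<in> Wge m n 1" using D ent_empty[of D m n 1] by (simp add: Wge_def)
    then show ?thesis by blast
  next
    case False
    have DW: "D \<in> Wset m n" and Dd: "\<forall>i \<mu>. snd D i \<mu> \<noteq> 0 \<longrightarrow> mdeg m \<mu> \<ge> 0 + 1"
      using D unfolding Wge_def by blast+
    have im: "i < n"
    proof (rule ccontr)
      assume "\<not> i < n"
      then have "snd D i = sr_zero" using DW unfolding Wset_def by simp
      then show False using False by (simp add: sr_zero_def)
    qed
    have "snd D i \<in> Rset m n" using DW unfolding Wset_def by blast
    then have ok: "mono_ok m n \<mu>" using False unfolding Rset_def by blast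
    have d1: "mdeg m \<mu> \<ge> 1" using spec[OF spec[OF Dd, of i], of \<mu>] False by simp
    show ?thesis
    proof (cases "mdeg m \<mu> \<ge> 2")
      case True
      have a1: "\<forall>i' \<nu>. snd D i' \<nu> \<noteq> 0 \<longrightarrow> mdeg m \<nu> \<ge> 1 + 1" using z1 True by (metis Pair_inject one_add_one)
      have a2: "\<forall>t \<nu>. fst D t \<nu> \<noteq> 0 \<longrightarrow> mdeg m \<nu> \<ge> 1 + 1" using z2 by simp
      have "D \<in> Wge m n 1" using D a1 a2 unfolding Wge_def by blast
      then show ?thesis by blast
    next
      case False
      then have "mdeg m \<mu> = 1" using d1 by simp
      from deg1[OF ok this] show ?thesis
      proof
        assume "\<exists>k<m. \<mu> = ((\<lambda>_. 0)(k := 1), {})"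
        then obtain k where k: "k < m" "\<mu> = ((\<lambda>_. 0)(k := 1), {})" by blast
        have "D = wscale (snd D i \<mu>) (Wdy i (sr_x k))"
        proof (rule prod_eqI)
          show "snd D = snd (wscale (snd D i \<mu>) (Wdy i (sr_x k)))"
          proof (rule ext, rule ext)
            fix i' \<nu>
            show "snd D i' \<nu> = snd (wscale (snd D i \<mu>) (Wdy i (sr_x k))) i' \<nu>"
            proof (cases "i' = i \<and> \<nu> = \<mu>")
              case True then show ?thesis using k(2) by (simp add: wscale_def Wdy_def sr_scale_def sr_x_def)
            next
              case False
              then have "snd D i' \<nu> = 0" using z1 by blast
              then show ?thesis using False k(2) by (auto simp: wscale_def Wdy_def sr_scale_def sr_x_def sr_zero_def)
            qed
          qed
          show "fst D = fst (wscale (snd D i \<mu>) (Wdy i (sr_x k)))"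
            using z2 by (simp add: fun_eq_iff wscale_def Wdy_def sr_scale_def sr_zero_def)
        qed
        then show ?thesis using im k by blast
      next
        assume "\<exists>j<n. \<mu> = (\<lambda>_. 0, {j})"
        then obtain k where k: "k < n" "\<mu> = (\<lambda>_. 0, {k})" by blast
        have "D = wscale (snd D i \<mu>) (Wdy i (sr_y k))"
        proof (rule prod_eqI)
          show "snd D = snd (wscale (snd D i \<mu>) (Wdy i (sr_y k)))"
          proof (rule ext, rule ext)
            fix i' \<nu>
            show "snd D i' \<nu> = snd (wscale (snd D i \<mu>) (Wdy i (sr_y k))) i' \<nu>"
            proof (cases "i' = i \<and> \<nu> = \<mu>")
              case True then show ?thesis using k(2) by (simp add: wscale_def Wdy_def sr_scale_def sr_y_def)
            next
              case False
              then have "snd D i' \<nu> = 0" using z1 by blast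
              then show ?thesis using False k(2) by (auto simp: wscale_def Wdy_def sr_scale_def sr_y_def sr_zero_def)
            qed
          qed
          show "fst D = fst (wscale (snd D i \<mu>) (Wdy i (sr_y k)))"
            using z2 by (simp add: fun_eq_iff wscale_def Wdy_def sr_scale_def sr_zero_def)
        qed
        then show ?thesis using im k by blast
      qed
    qed
  qed
qed

theorem mainTheorem15:
  fixes m n :: nat
    and act :: "('k::field_char_0) sr \<Rightarrow> 'm::ab_group_add \<Rightarrow> 'm"
    and rho sigma :: "'k wd \<Rightarrow> 'm \<Rightarrow> 'm"
    and M' :: "'m set"
  assumes "alg_closed TYPE('k)"
    and "m \<ge> 1" and "n \<ge> 1"
    and "RG_module m n act rho sigma"
    and "\<forall>D\<in>Wge m n 1. \<forall>u. sigma D u = 0"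
    and "0 \<in> M'" and "\<forall>u\<in>M'. \<forall>v\<in>M'. u + v \<in> M'" and "\<forall>u\<in>M'. - u \<in> M'"
    and "\<forall>f\<in>Rset m n. \<forall>u\<in>M'. act f u \<in> M'"
    and "\<forall>D\<in>Wset m n. \<forall>u\<in>M'. rho D u \<in> M'"
  shows "\<forall>D\<in>Wge m n 0. \<forall>u\<in>M'. sigma D u \<in> M'"
proof -
  note RG = assms(4)[unfolded RG_module_def R_module_def]
  have actadd: "\<And>f g u. f \<in> Rset m n \<Longrightarrow> g \<in> Rset m n \<Longrightarrow> act (sr_add f g) u = act f u + act g u"
    using RG[THEN conjunct1] by blast
  have act1: "\<And>u. act (sr_const 1) u = u" using RG[THEN conjunct1] by blast
  have act0: "\<And>u. act sr_zero u = 0"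
  proof -
    fix u
    have "sr_add sr_zero sr_zero = (sr_zero :: 'k sr)" by (simp add: sr_add_def sr_zero_def)
    then have "act sr_zero u = act sr_zero u + act sr_zero u"
      using actadd[OF sr_zero_Rset sr_zero_Rset, of u] by simp
    then show "act sr_zero u = 0" by simp
  qed
  have sig: "Lie_rep m n (Wge m n 0) act sigma" using RG[THEN conjunct2, THEN conjunct2, THEN conjunct1] by blast
  have sigadd: "\<And>D E u. D \<in> Wge m n 0 \<Longrightarrow> E \<in> Wge m n 0 \<Longrightarrow> sigma (wadd D E) u = sigma D u + sigma E u"
    using sig unfolding Lie_rep_def by blast
  have sigscale: "\<And>D c u. D \<in> Wge m n 0 \<Longrightarrow> sigma (wscale c D) u = act (sr_const c) (sigma D u)"
    using sig unfolding Lie_rep_def by blast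
  have iv: "\<And>p f u. Rhom m n p f \<Longrightarrow>
        (\<forall>l<m. rho (Wdx l f) u =
            act f (rho (Wdx l (sr_const 1)) u)
          + (\<Sum>i<m. act (dx i f) (sigma (Wdx l (sr_x i)) u))
          + (if p then (\<Sum>j<n. act (dy j f) (sigma (Wdx l (sr_y j)) u))
                  else - (\<Sum>j<n. act (dy j f) (sigma (Wdx l (sr_y j)) u))))
      \<and> (\<forall>l<n. rho (Wdy l f) u =
            act f (rho (Wdy l (sr_const 1)) u)
          + (\<Sum>i<m. act (dx i f) (sigma (Wdy l (sr_x i)) u))
          + (if p then (\<Sum>j<n. act (dy j f) (sigma (Wdy l (sr_y j)) u))
                  else - (\<Sum>j<n. act (dy j f) (sigma (Wdy l (sr_y j)) u))))"
    using RG[THEN conjunct2, THEN conjunct2, THEN conjunct2, THEN conjunct2, THEN conjunct2, THEN conjunct2] by blast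
  have Madd: "\<And>u v. u \<in> M' \<Longrightarrow> v \<in> M' \<Longrightarrow> u + v \<in> M'" using assms(7) by blast
  have Mneg: "\<And>u. u \<in> M' \<Longrightarrow> - u \<in> M'" using assms(8) by blast
  have Mdiff: "\<And>u v. u \<in> M' \<Longrightarrow> v \<in> M' \<Longrightarrow> u - v \<in> M'"
    using Madd Mneg by (metis diff_conv_add_uminus)
  have Mact: "\<And>f u. f \<in> Rset m n \<Longrightarrow> u \<in> M' \<Longrightarrow> act f u \<in> M'" using assms(9) by blast
  have Mrho: "\<And>D u. D \<in> Wset m n \<Longrightarrow> u \<in> M' \<Longrightarrow> rho D u \<in> M'" using assms(10) by blast
  have sdx: "\<And>k g. k < m \<Longrightarrow> (\<Sum>i<m. act (dx i (sr_x k :: 'k sr)) (g i)) = g k"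
  proof -
    fix k g assume "k < (m::nat)"
    have "\<And>i. act (dx i (sr_x k :: 'k sr)) (g i) = (if i = k then g i else 0)"
      by (simp add: dx_x act0 act1)
    then show "(\<Sum>i<m. act (dx i (sr_x k :: 'k sr)) (g i)) = g k" using `k < m` by simp
  qed
  have sdx0: "\<And>k g. (\<Sum>i<m. act (dx i (sr_y k :: 'k sr)) (g i)) = 0"
    by (simp add: dx_y act0)
  have sdy: "\<And>k g. k < n \<Longrightarrow> (\<Sum>i<n. act (dy i (sr_y k :: 'k sr)) (g i)) = g k"
  proof -
    fix k g assume "k < (n::nat)"
    have "\<And>i. act (dy i (sr_y k :: 'k sr)) (g i) = (if i = k then g i else 0)"
      by (simp add: dy_y act0 act1)
    then show "(\<Sum>i<n. act (dy i (sr_y k :: 'k sr)) (g i)) = g k" using `k < n` by simp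
  qed
  have sdy0: "\<And>k g. (\<Sum>i<n. act (dy i (sr_x k :: 'k sr)) (g i)) = 0"
    by (simp add: dy_x act0)
  have K1: "\<And>l k u. l < m \<Longrightarrow> k < m \<Longrightarrow> u \<in> M' \<Longrightarrow> sigma (Wdx l (sr_x k)) u \<in> M'"
  proof -
    fix l k u assume l: "l < m" and k: "k < m" and u: "u \<in> M'"
    have "rho (Wdx l (sr_x k)) u = act (sr_x k) (rho (Wdx l (sr_const 1)) u) + sigma (Wdx l (sr_x k)) u"
      using iv[OF Rhom_x[OF k], of u] l k sdx sdy0 by simp
    then have "sigma (Wdx l (sr_x k)) u = rho (Wdx l (sr_x k)) u - act (sr_x k) (rho (Wdx l (sr_const 1)) u)"
      by (simp add: algebra_simps)
    then show "sigma (Wdx l (sr_x k)) u \<in> M'"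
      using Mdiff Mrho Mact u l k Wdx_Wset sr_x_Rset sr_const_Rset by metis
  qed
  have K2: "\<And>l k u. l < m \<Longrightarrow> k < n \<Longrightarrow> u \<in> M' \<Longrightarrow> sigma (Wdx l (sr_y k)) u \<in> M'"
  proof -
    fix l k u assume l: "l < m" and k: "k < n" and u: "u \<in> M'"
    have "rho (Wdx l (sr_y k)) u = act (sr_y k) (rho (Wdx l (sr_const 1)) u) + sigma (Wdx l (sr_y k)) u"
      using iv[OF Rhom_y[OF k], of u] l k sdy sdx0 by simp
    then have "sigma (Wdx l (sr_y k)) u = rho (Wdx l (sr_y k)) u - act (sr_y k) (rho (Wdx l (sr_const 1)) u)"
      by (simp add: algebra_simps)
    then show "sigma (Wdx l (sr_y k)) u \<in> M'"
      using Mdiff Mrho Mact u l k Wdx_Wset sr_y_Rset sr_const_Rset by metis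
  qed
  have K3: "\<And>l k u. l < n \<Longrightarrow> k < m \<Longrightarrow> u \<in> M' \<Longrightarrow> sigma (Wdy l (sr_x k)) u \<in> M'"
  proof -
    fix l k u assume l: "l < n" and k: "k < m" and u: "u \<in> M'"
    have "rho (Wdy l (sr_x k)) u = act (sr_x k) (rho (Wdy l (sr_const 1)) u) + sigma (Wdy l (sr_x k)) u"
      using iv[OF Rhom_x[OF k], of u] l k sdx sdy0 by simp
    then have "sigma (Wdy l (sr_x k)) u = rho (Wdy l (sr_x k)) u - act (sr_x k) (rho (Wdy l (sr_const 1)) u)"
      by (simp add: algebra_simps)
    then show "sigma (Wdy l (sr_x k)) u \<in> M'"
      using Mdiff Mrho Mact u l k Wdy_Wset sr_x_Rset sr_const_Rset by metis
  qed
  have K4: "\<And>l k u. l < n \<Longrightarrow> k < n \<Longrightarrow> u \<in> M' \<Longrightarrow> sigma (Wdy l (sr_y k)) u \<in> M'"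
  proof -
    fix l k u assume l: "l < n" and k: "k < n" and u: "u \<in> M'"
    have "rho (Wdy l (sr_y k)) u = act (sr_y k) (rho (Wdy l (sr_const 1)) u) + sigma (Wdy l (sr_y k)) u"
      using iv[OF Rhom_y[OF k], of u] l k sdy sdx0 by simp
    then have "sigma (Wdy l (sr_y k)) u = rho (Wdy l (sr_y k)) u - act (sr_y k) (rho (Wdy l (sr_const 1)) u)"
      by (simp add: algebra_simps)
    then show "sigma (Wdy l (sr_y k)) u \<in> M'"
      using Mdiff Mrho Mact u l k Wdy_Wset sr_y_Rset sr_const_Rset by metis
  qed
  have sig1: "\<And>D u. D \<in> Wge m n 1 \<Longrightarrow> sigma D u = 0" using assms(5) by blast
  have M0: "0 \<in> M'" by (rule assms(6))
  have WgeW: "\<And>D. D \<in> Wge m n 0 \<Longrightarrow> D \<in> Wset m n" unfolding Wge_def by blast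
  have scaleM: "\<And>c X u. X \<in> Wge m n 0 \<Longrightarrow> sigma X u \<in> M' \<Longrightarrow> sigma (wscale c X) u \<in> M'"
    using sigscale Mact sr_const_Rset by metis
  have single: "\<And>(E::'k wd) u. E \<in> Wge m n 0 \<Longrightarrow> ent E \<subseteq> {e} \<Longrightarrow> u \<in> M' \<Longrightarrow> sigma E u \<in> M'" for e
  proof -
    fix E :: "'k wd" and u assume E: "E \<in> Wge m n 0" and eE: "ent E \<subseteq> {e}" and u: "u \<in> M'"
    obtain a \<mu> where e: "e = (a, \<mu>)" by (cases e)
    show "sigma E u \<in> M'"
    proof (cases a)
      case (Inl i)
      have "E \<in> Wge m n 1 \<or> (i < m \<and> (\<exists>k<m. E = wscale (fst E i \<mu>) (Wdx i (sr_x k))))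
       \<or> (i < m \<and> (\<exists>j<n. E = wscale (fst E i \<mu>) (Wdx i (sr_y j))))"
        using single_x[OF E, of i \<mu>] eE e Inl by simp
      then show ?thesis
      proof (elim disjE exE conjE)
        assume "E \<in> Wge m n 1" then show ?thesis using sig1 M0 by simp
      next
        fix k assume i: "i < m" and k: "k < m" and Eq: "E = wscale (fst E i \<mu>) (Wdx i (sr_x k))"
        have "Wdx i (sr_x k) \<in> Wge m n 0" using Wdx_Wge[OF i sr_x_Rset[OF k] x_deg[OF k]] .
        then show ?thesis using Eq scaleM K1[OF i k u] by metis
      next
        fix k assume i: "i < m" and k: "k < n" and Eq: "E = wscale (fst E i \<mu>) (Wdx i (sr_y k))"
        have "Wdx i (sr_y k) \<in> Wge m n 0" using Wdx_Wge[OF i sr_y_Rset[OF k] y_deg] .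
        then show ?thesis using Eq scaleM K2[OF i k u] by metis
      qed
    next
      case (Inr i)
      have "E \<in> Wge m n 1 \<or> (i < n \<and> (\<exists>k<m. E = wscale (snd E i \<mu>) (Wdy i (sr_x k))))
       \<or> (i < n \<and> (\<exists>j<n. E = wscale (snd E i \<mu>) (Wdy i (sr_y j))))"
        using single_y[OF E, of i \<mu>] eE e Inr by simp
      then show ?thesis
      proof (elim disjE exE conjE)
        assume "E \<in> Wge m n 1" then show ?thesis using sig1 M0 by simp
      next
        fix k assume i: "i < n" and k: "k < m" and Eq: "E = wscale (snd E i \<mu>) (Wdy i (sr_x k))"
        have "Wdy i (sr_x k) \<in> Wge m n 0" using Wdy_Wge[OF i sr_x_Rset[OF k] x_deg[OF k]] .
        then show ?thesis using Eq scaleM K3[OF i k u] by metis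
      next
        fix k assume i: "i < n" and k: "k < n" and Eq: "E = wscale (snd E i \<mu>) (Wdy i (sr_y k))"
        have "Wdy i (sr_y k) \<in> Wge m n 0" using Wdy_Wge[OF i sr_y_Rset[OF k] y_deg] .
        then show ?thesis using Eq scaleM K4[OF i k u] by metis
      qed
    qed
  qed
  have ind: "finite S \<Longrightarrow> \<forall>D\<in>Wge m n 0. ent D \<subseteq> S \<longrightarrow> (\<forall>u\<in>M'. sigma D u \<in> M')" for S
  proof (induction S rule: finite_induct)
    case empty
    show ?case
    proof (intro ballI impI)
      fix D :: "'k wd" and u assume D: "D \<in> Wge m n 0" and "ent D \<subseteq> {}" and u: "u \<in> M'"
      then have "D \<in> Wge m n 1" using ent_empty[OF WgeW[OF D]] by blast
      then show "sigma D u \<in> M'" using sig1 M0 by simp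
    qed
  next
    case (insert e S)
    show ?case
    proof (intro ballI impI)
      fix D :: "'k wd" and u assume D: "D \<in> Wge m n 0" and eD: "ent D \<subseteq> insert e S" and u: "u \<in> M'"
      have z: "zap e D \<in> Wge m n 0" by (rule zap_Wge[OF D])
      have g: "sgl e D \<in> Wge m n 0" by (rule sgl_Wge[OF D])
      have "ent (zap e D) \<subseteq> S" using eD ent_zap[of e D] by blast
      then have "sigma (zap e D) u \<in> M'" using insert.IH z u by blast
      moreover have "sigma (sgl e D) u \<in> M'" using single[OF g ent_sgl u] .
      moreover have "sigma D u = sigma (zap e D) u + sigma (sgl e D) u"
        using sigadd[OF z g, of u] wadd_zap_sgl[of e D] by simp
      ultimately show "sigma D u \<in> M'" using Madd by simp
    qed
  qed
  show ?thesis
  proof (intro ballI)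
    fix D :: "'k wd" and u assume D: "D \<in> Wge m n 0" and u: "u \<in> M'"
    show "sigma D u \<in> M'" using ind[OF finite_ent[OF WgeW[OF D]]] D u by blast
  qed
qed

end
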